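(* Consider a fixed-size experiment measuring a binary observable $P$ (single-shot outcomes in $\{-1,+1\}$) with ideal expectation $\langle P\rangle_0=1$. Fix a Richardson rule of order $k\ge1$ with scale factors $1=\lambda_0<\cdots<\lambda_k$, coefficients $c_j$ with $\sum_jc_j=1$, $\sum_jc_j\lambda_j^m=0$ ($m=1,\ldots,k$), allocation fractions $\pi_j>0$, $\sum_j\pi_j=1$, independent samples across scales. Suppose that for each $j$ \[ \mu(\lambda_j\epsilon)=\langle P\rangle_{\lambda_j\epsilon}=(1-\gamma\lambda_j\epsilon)^{\ell_n}+O_n(\epsilon^2),\qquad\gamma>0, \] where $\ell_n$ is a fixed positive integer. Let $\kappa_n=\gamma\ell_n$. Then, with $D(\epsilon)=\mathrm{Bias}_{\mathrm{noisy}}(\epsilon)^2-\mathrm{Bias}_{\mathrm{ZNE}}(\epsilon)^2$ and $A_k(\epsilon)=\sum_jc_j^2v(\lambda_j\epsilon)/\pi_j-v(\epsilon)$, \[ D(\epsilon)=\kappa_n^2\epsilon^2+O_n(\epsilon^3),\qquad v_n(\epsilon)=2\kappa_n\epsilon+O_n(\epsilon^2),\qquad A_k(\epsilon)=K_{1,k,n}\epsilon+O_n(\epsilon^2), \] with \[ K_{1,k,n}=2\kappa_n\left[\sum_j\frac{c_j^2\lambda_j}{\pi_j}-1\right]; \] that is, the leading MSE balance $\Delta_{\mathrm{MSE}}(\epsilon,B)=D(\epsilon)-A_k(\epsilon)/B$ holds with $p=1$, $q=1$, $D_{1,n}=\kappa_n^2$, $\nu_n=2\kappa_n$. The lower local help-harm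 boundary satisfies \[ \epsilon^*_n(B)\sim\frac{2}{\kappa_n}\left[\sum_j\frac{c_j^2\lambda_j}{\pi_j}-1\right]B^{-1}\qquad(B\to\infty). \]
   Context: $\mu(\epsilon)$ is the noisy expectation of $P$, $v_n(\epsilon)=1-\mu(\epsilon)^2$ its single-shot variance. With total shot budget $B$, the unmitigated estimator is the mean of $B$ shots at noise $\epsilon$ and $\widehat\mu_{\mathrm{ZNE}}=\sum_jc_j\widehat\mu(\lambda_j\epsilon)$ with $\widehat\mu(\lambda_j\epsilon)$ the mean of $\pi_jB$ shots at noise $\lambda_j\epsilon$. $\mathrm{Bias}_{\mathrm{noisy}}=\mu(\epsilon)-\langle P\rangle_0$, $\mathrm{Bias}_{\mathrm{ZNE}}=\mathbb E[\widehat\mu_{\mathrm{ZNE}}]-\langle P\rangle_0$, and $\Delta_{\mathrm{MSE}}=\mathrm{MSE}_{\mathrm{noisy}}-\mathrm{MSE}_{\mathrm{ZNE}}$ with $\mathrm{MSE}=\mathbb E[(\widehat\mu-\langle P\rangle_0)^2]$. The lower local help-harm boundary $\epsilon^*_n(B)$ is the first positive small-noise zero of $\Delta_{\mathrm{MSE}}(\cdot,B)$ where it changes from negative to positive; $\sim$ means ratio tends to $1$. *)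

theory Defs
  imports "HOL-Analysis.Analysis" "HOL-Library.Landau_Symbols"
begin

text \<open>Ideal expectation is fixed to 1. mu is the noisy expectation as a function
of the noise level; the Richardson rule is given by scale factors lam j, coefficients
c j and allocation fractions pr j, for j = 0..k.\<close>

definition single_shot_var :: "(real \<Rightarrow> real) \<Rightarrow> real \<Rightarrow> real" where
  "single_shot_var mu \<epsilon> = 1 - (mu \<epsilon>)^2"

definition bias_noisy :: "(real \<Rightarrow> real) \<Rightarrow> real \<Rightarrow> real" where
  "bias_noisy mu \<epsilon> = mu \<epsilon> - 1"

definition bias_zne :: "nat \<Rightarrow> (nat \<Rightarrow> real) \<Rightarrow> (nat \<Rightarrow> real) \<Rightarrow> (real \<Rightarrow> real) \<Rightarrow> real \<Rightarrow> real" where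
  "bias_zne k c lam mu \<epsilon> = (\<Sum>j\<le>k. c j * mu (lam j * \<epsilon>)) - 1"

definition mse_noisy :: "(real \<Rightarrow> real) \<Rightarrow> real \<Rightarrow> real \<Rightarrow> real" where
  "mse_noisy mu \<epsilon> B = (bias_noisy mu \<epsilon>)^2 + single_shot_var mu \<epsilon> / B"

text \<open>MSE of the ZNE estimator with independent means of pr j * B shots at noise lam j * eps.\<close>
definition mse_zne :: "nat \<Rightarrow> (nat \<Rightarrow> real) \<Rightarrow> (nat \<Rightarrow> real) \<Rightarrow> (nat \<Rightarrow> real) \<Rightarrow> (real \<Rightarrow> real) \<Rightarrow> real \<Rightarrow> real \<Rightarrow> real" where
  "mse_zne k c lam pr mu \<epsilon> B = (bias_zne k c lam mu \<epsilon>)^2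
     + (\<Sum>j\<le>k. (c j)^2 * single_shot_var mu (lam j * \<epsilon>) / (pr j * B))"

definition delta_mse :: "nat \<Rightarrow> (nat \<Rightarrow> real) \<Rightarrow> (nat \<Rightarrow> real) \<Rightarrow> (nat \<Rightarrow> real) \<Rightarrow> (real \<Rightarrow> real) \<Rightarrow> real \<Rightarrow> real \<Rightarrow> real" where
  "delta_mse k c lam pr mu \<epsilon> B = mse_noisy mu \<epsilon> B - mse_zne k c lam pr mu \<epsilon> B"

definition var_excess :: "nat \<Rightarrow> (nat \<Rightarrow> real) \<Rightarrow> (nat \<Rightarrow> real) \<Rightarrow> (nat \<Rightarrow> real) \<Rightarrow> (real \<Rightarrow> real) \<Rightarrow> real \<Rightarrow> real" where
  "var_excess k c lam pr mu \<epsilon> =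
     (\<Sum>j\<le>k. (c j)^2 * single_shot_var mu (lam j * \<epsilon>) / pr j) - single_shot_var mu \<epsilon>"

definition lower_boundary :: "(real \<Rightarrow> real) \<Rightarrow> real \<Rightarrow> bool" where
  "lower_boundary \<Delta> e \<longleftrightarrow> 0 < e \<and> \<Delta> e = 0 \<and> (\<forall>x\<in>{0<..<e}. \<Delta> x < 0)
     \<and> (\<exists>\<delta>>0. \<forall>x\<in>{e<..<e+\<delta>}. 0 < \<Delta> x)"

end

theory Submission
  imports Defs "HOL-Real_Asymp.Real_Asymp"
begin


lemma pow_expand: "\<exists>M. \<forall>x::real. \<bar>x\<bar> \<le> 1 \<longrightarrow> \<bar>(1 - a*x)^n - 1 + real n*a*x\<bar> \<le> M * x^2"
proof (induction n)
  case 0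
  then show ?case by (intro exI[of _ 0]) auto
next
  case (Suc n)
  then obtain M where M: "\<forall>x::real. \<bar>x\<bar> \<le> 1 \<longrightarrow> \<bar>(1 - a*x)^n - 1 + real n*a*x\<bar> \<le> M * x^2" by blast
  show ?case
  proof (intro exI[of _ "(1 + \<bar>a\<bar>) * M + real n * a^2"] allI impI)
    fix x :: real assume x: "\<bar>x\<bar> \<le> 1"
    have eq: "(1 - a*x)^Suc n - 1 + real (Suc n)*a*x = (1 - a*x) * ((1 - a*x)^n - 1 + real n*a*x) + real n * a^2 * x^2"
      by (simp add: algebra_simps power2_eq_square)
    have h1: "\<bar>1 - a*x\<bar> \<le> 1 + \<bar>a\<bar>"
    proof -
      have "\<bar>a*x\<bar> \<le> \<bar>a\<bar>" using x by (simp add: abs_mult mult_left_le)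
      then show ?thesis by linarith
    qed
    have h2: "\<bar>(1 - a*x)^n - 1 + real n*a*x\<bar> \<le> M * x^2" using M x by blast
    have "\<bar>(1 - a*x) * ((1 - a*x)^n - 1 + real n*a*x)\<bar> \<le> (1 + \<bar>a\<bar>) * (M * x^2)"
      unfolding abs_mult by (rule mult_mono[OF h1 h2]) auto
    then have "\<bar>(1 - a*x)^Suc n - 1 + real (Suc n)*a*x\<bar> \<le> (1 + \<bar>a\<bar>) * (M * x^2) + real n * a^2 * x^2"
      unfolding eq by (smt (verit) zero_le_power2 mult_nonneg_nonneg of_nat_0_le_iff)
    then show "\<bar>(1 - a*x)^Suc n - 1 + real (Suc n)*a*x\<bar> \<le> ((1 + \<bar>a\<bar>) * M + real n * a^2) * x^2"
      by (simp add: algebra_simps)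
  qed
qed

lemma pow_bigo: "(\<lambda>x::real. (1 - a*x)^n - 1 + real n*a*x) \<in> O[at_right 0](\<lambda>x. x^2)"
proof -
  obtain M where M: "\<forall>x::real. \<bar>x\<bar> \<le> 1 \<longrightarrow> \<bar>(1 - a*x)^n - 1 + real n*a*x\<bar> \<le> M * x^2"
    using pow_expand by blast
  have "eventually (\<lambda>x::real. x \<in> {0<..<1}) (at_right 0)" by (rule eventually_at_right_real) simp
  then have "eventually (\<lambda>x::real. norm ((1 - a*x)^n - 1 + real n*a*x) \<le> M * norm (x^2)) (at_right 0)"
    by eventually_elim (use M in auto)
  then show ?thesis by (rule bigoI)
qed

lemma cmul_bigo: "f \<in> O[F](g) \<Longrightarrow> (\<lambda>x. (c::real) * f x) \<in> O[F](g)"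
  by (cases "c = 0") auto

lemma R_bigo:
  assumes "(\<lambda>\<epsilon>. mu (l * \<epsilon>) - (1 - \<gamma> * l * \<epsilon>) ^ ell) \<in> O[at_right 0](\<lambda>\<epsilon>::real. \<epsilon>^2)"
  shows "(\<lambda>\<epsilon>. mu (l * \<epsilon>) - (1 - \<gamma> * real ell * l * \<epsilon>)) \<in> O[at_right 0](\<lambda>\<epsilon>::real. \<epsilon>^2)"
proof -
  have "(\<lambda>\<epsilon>. (mu (l * \<epsilon>) - (1 - \<gamma> * l * \<epsilon>) ^ ell) + ((1 - (\<gamma> * l) * \<epsilon>) ^ ell - 1 + real ell * (\<gamma> * l) * \<epsilon>))
     \<in> O[at_right 0](\<lambda>\<epsilon>::real. \<epsilon>^2)"
    by (rule sum_in_bigo(1)[OF assms pow_bigo])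
  moreover have "(\<lambda>\<epsilon>. (mu (l * \<epsilon>) - (1 - \<gamma> * l * \<epsilon>) ^ ell) + ((1 - (\<gamma> * l) * \<epsilon>) ^ ell - 1 + real ell * (\<gamma> * l) * \<epsilon>))
     = (\<lambda>\<epsilon>. mu (l * \<epsilon>) - (1 - \<gamma> * real ell * l * \<epsilon>))"
    by (auto simp: algebra_simps)
  ultimately show ?thesis by simp
qed

lemma sq_cube: "(\<lambda>x::real. x^2) \<in> O[at_right 0](\<lambda>x. x)" by real_asymp
lemma q_cube: "(\<lambda>x::real. x^4) \<in> O[at_right 0](\<lambda>x. x^3)" by real_asymp
lemma x_x2: "(\<lambda>x::real. x) \<in> O[at_right 0](\<lambda>x. x)" by simp



lemma lower_ineq:
  fixes \<kappa> K a B \<eta> x C1 C2 Dx Ax :: real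
  assumes "\<kappa> > 0" "K > 0" "a = K / \<kappa>^2" "B > 0" "0 < \<eta>" "\<eta> < 1"
    "0 < x" "x \<le> (1 - \<eta>) * a / B" "C1 \<ge> 0" "C2 \<ge> 0"
    "Dx \<le> \<kappa>^2 * x^2 + C1 * x^3" "Ax \<ge> K * x - C2 * x^2"
    "(4 * C1 * a^2 + 2 * C2 * a) / B < \<eta> * K"
  shows "Dx - Ax / B < 0"
proof -
  have a0: "a > 0" using assms by simp
  have xa: "x \<le> a / B" using assms(8) assms(5) a0 assms(4)
    by (smt (verit, best) divide_right_mono mult_le_cancel_right1 mult_nonneg_nonneg)
  have k1: "\<kappa>^2 * x \<le> (1 - \<eta>) * K / B"
  proof -
    have "\<kappa>^2 * x \<le> \<kappa>^2 * ((1 - \<eta>) * a / B)" using assms(8) assms(1) by (intro mult_left_mono) auto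
    also have "\<dots> = (1 - \<eta>) * K / B" using assms(1,3) by (simp add: field_simps)
    finally show ?thesis .
  qed
  have c1: "C1 * x^2 \<le> C1 * a^2 / B^2"
  proof -
    have "x^2 \<le> (a/B)^2" using xa assms(7) by (intro power_mono) auto
    then have "C1 * x^2 \<le> C1 * (a/B)^2" using assms(9) by (intro mult_left_mono) auto
    then show ?thesis by (simp add: power_divide)
  qed
  have c2: "C2 * x / B \<le> C2 * a / B^2"
  proof -
    have "C2 * x \<le> C2 * (a / B)" using xa assms(10) by (intro mult_left_mono) auto
    then have "C2 * x / B \<le> C2 * (a/B) / B" using assms(4) by (intro divide_right_mono) auto
    then show ?thesis by (simp add: power2_eq_square)
  qed
  have small: "(C1 * a^2 + C2 * a) / B^2 < \<eta> * K / B"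
  proof -
    have "(C1 * a^2 + C2 * a) \<le> (4 * C1 * a^2 + 2 * C2 * a)" using assms(9,10) a0 by simp
    then have "(C1 * a^2 + C2 * a) / B < \<eta> * K" using assms(13,4)
      by (smt (verit) divide_right_mono)
    then have "(C1 * a^2 + C2 * a) / B / B < \<eta> * K / B" using assms(4) by (intro divide_strict_right_mono) auto
    then show ?thesis by (simp add: power2_eq_square)
  qed
  have br: "\<kappa>^2 * x - K / B + C1 * x^2 + C2 * x / B < 0"
  proof -
    have "(1 - \<eta>) * K / B = K / B - \<eta> * K / B" using assms(4) by (simp add: field_simps)
    moreover have "C1 * a^2 / B^2 + C2 * a / B^2 = (C1 * a^2 + C2 * a) / B^2" by (simp add: add_divide_distrib)
    ultimately show ?thesis using k1 c1 c2 small by linarith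
  qed
  have "Dx - Ax / B \<le> \<kappa>^2 * x^2 + C1 * x^3 - (K * x - C2 * x^2) / B"
    using assms(11,12,4) by (smt (verit) divide_right_mono)
  also have "\<dots> = x * (\<kappa>^2 * x - K / B + C1 * x^2 + C2 * x / B)"
    using assms(4) by (simp add: field_simps power2_eq_square power3_eq_cube)
  also have "\<dots> < 0" using br assms(7) by (simp add: mult_pos_neg)
  finally show ?thesis .
qed

lemma upper_ineq:
  fixes \<kappa> K a B \<eta> y C1 C2 Dy Ay :: real
  assumes "\<kappa> > 0" "K > 0" "a = K / \<kappa>^2" "B > 0" "0 < \<eta>" "\<eta> < 1"
    "y = (1 + \<eta>) * a / B" "C1 \<ge> 0" "C2 \<ge> 0"
    "Dy \<ge> \<kappa>^2 * y^2 - C1 * y^3" "Ay \<le> K * y + C2 * y^2"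
    "(4 * C1 * a^2 + 2 * C2 * a) / B < \<eta> * K"
  shows "Dy - Ay / B > 0"
proof -
  have a0: "a > 0" using assms by simp
  have y0: "y > 0" using assms a0 by simp
  have ya: "y \<le> 2 * a / B" using assms(7,6,4) a0
    by (simp add: divide_right_mono mult_right_mono)
  have k1: "\<kappa>^2 * y = (1 + \<eta>) * K / B" using assms(1,3,7) by (simp add: field_simps)
  have c1: "C1 * y^2 \<le> 4 * C1 * a^2 / B^2"
  proof -
    have "y^2 \<le> (2*a/B)^2" using ya y0 by (intro power_mono) auto
    then have "C1 * y^2 \<le> C1 * (2*a/B)^2" using assms(8) by (intro mult_left_mono) auto
    then show ?thesis by (simp add: power_divide power_mult_distrib mult.assoc mult.left_commute)
  qed
  have c2: "C2 * y / B \<le> 2 * C2 * a / B^2"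
  proof -
    have "C2 * y \<le> C2 * (2 * a / B)" using ya assms(9) by (intro mult_left_mono) auto
    then have "C2 * y / B \<le> C2 * (2 * a/B) / B" using assms(4) by (intro divide_right_mono) auto
    then show ?thesis by (simp add: power2_eq_square algebra_simps)
  qed
  have small: "(4 * C1 * a^2 + 2 * C2 * a) / B^2 < \<eta> * K / B"
  proof -
    have "(4 * C1 * a^2 + 2 * C2 * a) / B / B < \<eta> * K / B" using assms(4,12) by (intro divide_strict_right_mono) auto
    then show ?thesis by (simp add: power2_eq_square)
  qed
  have br: "\<kappa>^2 * y - K / B - C1 * y^2 - C2 * y / B > 0"
  proof -
    have "(1 + \<eta>) * K / B = K / B + \<eta> * K / B" using assms(4) by (simp add: field_simps)
    moreover have "4 * C1 * a^2 / B^2 + 2 * C2 * a / B^2 = (4 * C1 * a^2 + 2 * C2 * a) / B^2" by (simp add: add_divide_distrib)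
    ultimately show ?thesis using k1 c1 c2 small by linarith
  qed
  have "0 < y * (\<kappa>^2 * y - K / B - C1 * y^2 - C2 * y / B)" using br y0 by simp
  also have "\<dots> = \<kappa>^2 * y^2 - C1 * y^3 - (K * y + C2 * y^2) / B"
    using assms(4) by (simp add: field_simps power2_eq_square power3_eq_cube)
  also have "\<dots> \<le> Dy - Ay / B"
    using assms(10,11,4) by (smt (verit) divide_right_mono)
  finally show ?thesis .
qed


lemma x_x: "(\<lambda>x::real. x) \<in> O[at_right 0](\<lambda>x. x)" by simp
lemma x3_x2: "(\<lambda>x::real. x^3) \<in> O[at_right 0](\<lambda>x. x^2)" by real_asymp
lemma x4_x2: "(\<lambda>x::real. x^4) \<in> O[at_right 0](\<lambda>x. x^2)" by real_asymp

lemma prodR: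
  assumes "R \<in> O[at_right 0](\<lambda>x::real. x^2)"
  shows "(\<lambda>x. x * R x) \<in> O[at_right 0](\<lambda>x. x^3)"
proof -
  have "(\<lambda>x. x * R x) \<in> O[at_right 0](\<lambda>x. x * x^2)" by (rule landau_o.big.mult[OF x_x assms])
  moreover have "(\<lambda>x::real. x * x^2) = (\<lambda>x. x^3)" by (auto simp: fun_eq_iff power2_eq_square power3_eq_cube)
  ultimately show ?thesis by simp
qed

lemma prodRS:
  assumes "R \<in> O[at_right 0](\<lambda>x::real. x^2)" "S \<in> O[at_right 0](\<lambda>x::real. x^2)"
  shows "(\<lambda>x. R x * S x) \<in> O[at_right 0](\<lambda>x. x^4)"
proof -
  have "(\<lambda>x. R x * S x) \<in> O[at_right 0](\<lambda>x. x^2 * x^2)" by (rule landau_o.big.mult[OF assms])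
  moreover have "(\<lambda>x::real. x^2 * x^2) = (\<lambda>x. x^4)" by (auto simp: fun_eq_iff power2_eq_square power4_eq_xxxx)
  ultimately show ?thesis by simp
qed

lemma claim1_gen:
  assumes R0: "R0 \<in> O[at_right 0](\<lambda>x::real. x^2)" and S: "S \<in> O[at_right 0](\<lambda>x::real. x^2)"
  shows "(\<lambda>x. (- \<kappa> * x + R0 x)^2 - (S x)^2 - \<kappa>^2 * x^2) \<in> O[at_right 0](\<lambda>x. x^3)"
proof -
  have a: "(\<lambda>x. (-2*\<kappa>) * (x * R0 x)) \<in> O[at_right 0](\<lambda>x. x^3)" by (intro cmul_bigo prodR R0)
  have b: "(\<lambda>x. R0 x * R0 x) \<in> O[at_right 0](\<lambda>x. x^3)" by (rule landau_o.big_trans[OF prodRS[OF R0 R0] q_cube])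
  have c: "(\<lambda>x. S x * S x) \<in> O[at_right 0](\<lambda>x. x^3)" by (rule landau_o.big_trans[OF prodRS[OF S S] q_cube])
  have "(\<lambda>x. (-2*\<kappa>) * (x * R0 x) + R0 x * R0 x - S x * S x) \<in> O[at_right 0](\<lambda>x. x^3)"
    by (intro sum_in_bigo a b c)
  moreover have "(\<lambda>x. (-2*\<kappa>) * (x * R0 x) + R0 x * R0 x - S x * S x) = (\<lambda>x. (- \<kappa> * x + R0 x)^2 - (S x)^2 - \<kappa>^2 * x^2)"
    by (auto simp: fun_eq_iff power2_eq_square algebra_simps)
  ultimately show ?thesis by simp
qed

lemma claim2_gen:
  assumes R: "R \<in> O[at_right 0](\<lambda>x::real. x^2)"
  shows "(\<lambda>x. 1 - (1 - a * x + R x)^2 - 2 * a * x) \<in> O[at_right 0](\<lambda>x. x^2)"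
proof -
  have a: "(\<lambda>x. (- (a^2)) * x^2) \<in> O[at_right 0](\<lambda>x. x^2)" by (intro cmul_bigo) simp
  have b: "(\<lambda>x. R x * R x) \<in> O[at_right 0](\<lambda>x. x^2)" by (rule landau_o.big_trans[OF prodRS[OF R R] x4_x2])
  have c: "(\<lambda>x. 2 * R x) \<in> O[at_right 0](\<lambda>x. x^2)" by (intro cmul_bigo R)
  have d: "(\<lambda>x. (2*a) * (x * R x)) \<in> O[at_right 0](\<lambda>x. x^2)"
    by (intro cmul_bigo landau_o.big_trans[OF prodR[OF R] x3_x2])
  have "(\<lambda>x. (- (a^2)) * x^2 - R x * R x - 2 * R x + (2*a) * (x * R x)) \<in> O[at_right 0](\<lambda>x. x^2)"
    by (intro sum_in_bigo a b c d)
  moreover have "(\<lambda>x. (- (a^2)) * x^2 - R x * R x - 2 * R x + (2*a) * (x * R x)) = (\<lambda>x. 1 - (1 - a * x + R x)^2 - 2 * a * x)"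
    by (auto simp: fun_eq_iff power2_eq_square algebra_simps)
  ultimately show ?thesis by simp
qed


theorem proposition10:
  fixes k ell :: nat and c lam pr :: "nat \<Rightarrow> real" and mu :: "real \<Rightarrow> real" and \<gamma> :: real
  assumes k: "k \<ge> 1"
    and lam0: "lam 0 = 1"
    and lam_mono: "\<And>i j. i < j \<Longrightarrow> j \<le> k \<Longrightarrow> lam i < lam j"
    and c_sum: "(\<Sum>j\<le>k. c j) = 1"
    and c_moments: "\<And>m. 1 \<le> m \<Longrightarrow> m \<le> k \<Longrightarrow> (\<Sum>j\<le>k. c j * lam j ^ m) = 0"
    and pi_pos: "\<And>j. j \<le> k \<Longrightarrow> pr j > 0"
    and pi_sum: "(\<Sum>j\<le>k. pr j) = 1"
    and \<gamma>: "\<gamma> > 0"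
    and ell: "ell > 0"
    and mu_exp: "\<And>j. j \<le> k \<Longrightarrow>
       (\<lambda>\<epsilon>. mu (lam j * \<epsilon>) - (1 - \<gamma> * lam j * \<epsilon>) ^ ell) \<in> O[at_right 0](\<lambda>\<epsilon>. \<epsilon>^2)"
  shows
    "(\<lambda>\<epsilon>. ((bias_noisy mu \<epsilon>)^2 - (bias_zne k c lam mu \<epsilon>)^2) - (\<gamma> * real ell)^2 * \<epsilon>^2)
        \<in> O[at_right 0](\<lambda>\<epsilon>. \<epsilon>^3)
     \<and> (\<lambda>\<epsilon>. single_shot_var mu \<epsilon> - 2 * (\<gamma> * real ell) * \<epsilon>) \<in> O[at_right 0](\<lambda>\<epsilon>. \<epsilon>^2)
     \<and> (\<lambda>\<epsilon>. var_excess k c lam pr mu \<epsilon>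
           - 2 * (\<gamma> * real ell) * ((\<Sum>j\<le>k. (c j)^2 * lam j / pr j) - 1) * \<epsilon>)
        \<in> O[at_right 0](\<lambda>\<epsilon>. \<epsilon>^2)
     \<and> (\<forall>\<epsilon>. \<forall>B::nat. B > 0 \<longrightarrow> delta_mse k c lam pr mu \<epsilon> (real B) =
           ((bias_noisy mu \<epsilon>)^2 - (bias_zne k c lam mu \<epsilon>)^2) - var_excess k c lam pr mu \<epsilon> / real B)
     \<and> (\<forall>e :: nat \<Rightarrow> real.
          (\<forall>\<^sub>F B in at_top. lower_boundary (\<lambda>\<epsilon>. delta_mse k c lam pr mu \<epsilon> (real B)) (e B))
          \<longrightarrow> e \<sim>[at_top] (\<lambda>B. 2 / (\<gamma> * real ell) * ((\<Sum>j\<le>k. (c j)^2 * lam j / pr j) - 1) / real B))"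
proof -
  define \<kappa> where "\<kappa> = \<gamma> * real ell"
  have kpos: "\<kappa> > 0" using \<gamma> ell by (simp add: \<kappa>_def)
  define R where "R j \<epsilon> = mu (lam j * \<epsilon>) - (1 - \<kappa> * lam j * \<epsilon>)" for j \<epsilon>
  have RO: "R j \<in> O[at_right 0](\<lambda>\<epsilon>. \<epsilon>^2)" if "j \<le> k" for j
  proof -
    have "(\<lambda>\<epsilon>. mu (lam j * \<epsilon>) - (1 - \<gamma> * real ell * lam j * \<epsilon>)) \<in> O[at_right 0](\<lambda>\<epsilon>. \<epsilon>^2)"
      by (rule R_bigo[OF mu_exp[OF that]])
    moreover have "R j = (\<lambda>\<epsilon>. mu (lam j * \<epsilon>) - (1 - \<gamma> * real ell * lam j * \<epsilon>))"
      by (auto simp: R_def \<kappa>_def fun_eq_iff)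
    ultimately show ?thesis by simp
  qed
  have mu_eq: "mu (lam j * \<epsilon>) = 1 - \<kappa> * lam j * \<epsilon> + R j \<epsilon>" for j \<epsilon> by (simp add: R_def)
  have mu0: "mu \<epsilon> = 1 - \<kappa> * \<epsilon> + R 0 \<epsilon>" for \<epsilon> using mu_eq[of 0 \<epsilon>] lam0 by simp
  have c1: "(\<Sum>j\<le>k. c j * lam j) = 0" using c_moments[of 1] k by simp
  define S where "S \<epsilon> = (\<Sum>j\<le>k. c j * R j \<epsilon>)" for \<epsilon>
  have zne: "bias_zne k c lam mu \<epsilon> = S \<epsilon>" for \<epsilon>
  proof -
    have "(\<Sum>j\<le>k. c j * mu (lam j * \<epsilon>)) = (\<Sum>j\<le>k. c j - \<kappa> * \<epsilon> * (c j * lam j) + c j * R j \<epsilon>)"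
      by (intro sum.cong refl) (subst mu_eq, simp add: algebra_simps)
    also have "\<dots> = (\<Sum>j\<le>k. c j) - \<kappa> * \<epsilon> * (\<Sum>j\<le>k. c j * lam j) + (\<Sum>j\<le>k. c j * R j \<epsilon>)"
      by (simp add: sum.distrib sum_subtractf sum_distrib_left)
    finally show ?thesis using c_sum c1 by (simp add: bias_zne_def S_def)
  qed
  have noisy: "bias_noisy mu \<epsilon> = - \<kappa> * \<epsilon> + R 0 \<epsilon>" for \<epsilon> by (simp add: bias_noisy_def mu0)
  have SO: "S \<in> O[at_right 0](\<lambda>\<epsilon>. \<epsilon>^2)"
    unfolding S_def[abs_def] by (intro big_sum_in_bigo cmul_bigo RO) auto
  have R0O: "R 0 \<in> O[at_right 0](\<lambda>\<epsilon>. \<epsilon>^2)" by (rule RO) simp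
  define D where "D \<epsilon> = (bias_noisy mu \<epsilon>)^2 - (bias_zne k c lam mu \<epsilon>)^2" for \<epsilon>
  have P1: "(\<lambda>\<epsilon>. D \<epsilon> - \<kappa>^2 * \<epsilon>^2) \<in> O[at_right 0](\<lambda>\<epsilon>. \<epsilon>^3)"
    using claim1_gen[OF R0O SO, of \<kappa>] by (simp add: D_def noisy zne)
  define W where "W j \<epsilon> = single_shot_var mu (lam j * \<epsilon>) - 2 * \<kappa> * lam j * \<epsilon>" for j \<epsilon>
  have WO: "W j \<in> O[at_right 0](\<lambda>\<epsilon>. \<epsilon>^2)" if "j \<le> k" for j
  proof -
    have "(\<lambda>x. 1 - (1 - (\<kappa> * lam j) * x + R j x)^2 - 2 * (\<kappa> * lam j) * x) \<in> O[at_right 0](\<lambda>x. x^2)"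
      by (rule claim2_gen[OF RO[OF that]])
    moreover have "W j = (\<lambda>x. 1 - (1 - (\<kappa> * lam j) * x + R j x)^2 - 2 * (\<kappa> * lam j) * x)"
      by (auto simp: fun_eq_iff W_def single_shot_var_def R_def algebra_simps)
    ultimately show ?thesis by simp
  qed
  have P2: "(\<lambda>\<epsilon>. single_shot_var mu \<epsilon> - 2 * \<kappa> * \<epsilon>) \<in> O[at_right 0](\<lambda>\<epsilon>. \<epsilon>^2)"
  proof -
    have "W 0 = (\<lambda>\<epsilon>. single_shot_var mu \<epsilon> - 2 * \<kappa> * \<epsilon>)" by (auto simp: fun_eq_iff W_def lam0)
    then show ?thesis using WO[of 0] by simp
  qed
  define Sl where "Sl = (\<Sum>j\<le>k. (c j)^2 * lam j / pr j)"
  define A where "A \<epsilon> = var_excess k c lam pr mu \<epsilon>" for \<epsilon>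
  have P3: "(\<lambda>\<epsilon>. A \<epsilon> - 2 * \<kappa> * (Sl - 1) * \<epsilon>) \<in> O[at_right 0](\<lambda>\<epsilon>. \<epsilon>^2)"
  proof -
    have "(\<lambda>\<epsilon>. (\<Sum>j\<le>k. (c j)^2 / pr j * W j \<epsilon>) - W 0 \<epsilon>) \<in> O[at_right 0](\<lambda>\<epsilon>. \<epsilon>^2)"
      by (intro sum_in_bigo big_sum_in_bigo cmul_bigo WO) auto
    moreover have "(\<lambda>\<epsilon>. (\<Sum>j\<le>k. (c j)^2 / pr j * W j \<epsilon>) - W 0 \<epsilon>) = (\<lambda>\<epsilon>. A \<epsilon> - 2 * \<kappa> * (Sl - 1) * \<epsilon>)"
    proof
      fix \<epsilon>
      have "(\<Sum>j\<le>k. (c j)^2 * single_shot_var mu (lam j * \<epsilon>) / pr j)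
          = (\<Sum>j\<le>k. (c j)^2 / pr j * W j \<epsilon> + 2 * \<kappa> * \<epsilon> * ((c j)^2 * lam j / pr j))"
        proof (intro sum.cong refl)
          fix j assume "j \<in> {..k}"
          then have "pr j > 0" using pi_pos by simp
          then show "(c j)^2 * single_shot_var mu (lam j * \<epsilon>) / pr j = (c j)^2 / pr j * W j \<epsilon> + 2 * \<kappa> * \<epsilon> * ((c j)^2 * lam j / pr j)"
            by (simp add: W_def field_simps)
        qed
      also have "\<dots> = (\<Sum>j\<le>k. (c j)^2 / pr j * W j \<epsilon>) + 2 * \<kappa> * \<epsilon> * Sl"
        by (simp add: sum.distrib sum_distrib_left Sl_def)
      finally have e1: "(\<Sum>j\<le>k. (c j)^2 * single_shot_var mu (lam j * \<epsilon>) / pr j)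
          = (\<Sum>j\<le>k. (c j)^2 / pr j * W j \<epsilon>) + 2 * \<kappa> * \<epsilon> * Sl" .
      have e2: "single_shot_var mu \<epsilon> = W 0 \<epsilon> + 2 * \<kappa> * \<epsilon>" by (simp add: W_def lam0)
      show "(\<Sum>j\<le>k. (c j)^2 / pr j * W j \<epsilon>) - W 0 \<epsilon> = A \<epsilon> - 2 * \<kappa> * (Sl - 1) * \<epsilon>"
        unfolding A_def var_excess_def e1 e2 by (simp add: algebra_simps)
    qed
    ultimately show ?thesis by simp
  qed
  have P4: "\<forall>\<epsilon>. \<forall>B::nat. B > 0 \<longrightarrow> delta_mse k c lam pr mu \<epsilon> (real B) =
           ((bias_noisy mu \<epsilon>)^2 - (bias_zne k c lam mu \<epsilon>)^2) - var_excess k c lam pr mu \<epsilon> / real B"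
  proof (intro allI impI)
    fix \<epsilon> and B :: nat assume "B > 0"
    have "(\<Sum>j\<le>k. (c j)^2 * single_shot_var mu (lam j * \<epsilon>) / (pr j * real B))
        = (\<Sum>j\<le>k. (c j)^2 * single_shot_var mu (lam j * \<epsilon>) / pr j) / real B"
      by (simp add: sum_divide_distrib)
    then show "delta_mse k c lam pr mu \<epsilon> (real B) =
           ((bias_noisy mu \<epsilon>)^2 - (bias_zne k c lam mu \<epsilon>)^2) - var_excess k c lam pr mu \<epsilon> / real B"
      unfolding delta_mse_def mse_noisy_def mse_zne_def var_excess_def
      by (simp add: diff_divide_distrib)
  qed
  have P5: "\<forall>e :: nat \<Rightarrow> real.
          (\<forall>\<^sub>F B in at_top. lower_boundary (\<lambda>\<epsilon>. delta_mse k c lam pr mu \<epsilon> (real B)) (e B))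
          \<longrightarrow> e \<sim>[at_top] (\<lambda>B. 2 / \<kappa> * (Sl - 1) / real B)"
  proof (intro allI impI)
    fix e :: "nat \<Rightarrow> real"
    assume evb: "\<forall>\<^sub>F B in at_top. lower_boundary (\<lambda>\<epsilon>. delta_mse k c lam pr mu \<epsilon> (real B)) (e B)"
    have pk: "\<And>j. j \<le> k \<Longrightarrow> pr j > 0" using pi_pos by simp
    have lam_ge: "lam j \<ge> 1" if "j \<le> k" for j
      using lam_mono[of 0 j] that lam0 by (cases "j = 0") auto
    have S1: "Sl > 1"
    proof -
      have id1: "(\<Sum>j\<le>k. (c j)^2 / pr j) - 1 = (\<Sum>j\<le>k. pr j * (c j / pr j - 1)^2)"
      proof -
        have "(\<Sum>j\<le>k. pr j * (c j / pr j - 1)^2) = (\<Sum>j\<le>k. (c j)^2 / pr j - 2 * c j + pr j)"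
        proof (intro sum.cong refl)
          fix j assume "j \<in> {..k}"
          then have "pr j > 0" using pk by simp
          then show "pr j * (c j / pr j - 1)^2 = (c j)^2 / pr j - 2 * c j + pr j"
            by (simp add: field_simps power2_eq_square)
        qed
        also have "\<dots> = (\<Sum>j\<le>k. (c j)^2 / pr j) - 2 * (\<Sum>j\<le>k. c j) + (\<Sum>j\<le>k. pr j)"
          by (simp add: sum.distrib sum_subtractf sum_distrib_left)
        finally show ?thesis using c_sum pi_sum by simp
      qed
      have nn1: "(\<Sum>j\<le>k. pr j * (c j / pr j - 1)^2) \<ge> 0"
        proof (intro sum_nonneg)
          fix j assume "j \<in> {..k}"
          then have "pr j > 0" using pk by simp
          then show "0 \<le> pr j * (c j / pr j - 1)^2" by simp
        qed
      have id2: "Sl - (\<Sum>j\<le>k. (c j)^2 / pr j) = (\<Sum>j\<le>k. (c j)^2 * (lam j - 1) / pr j)"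
        unfolding Sl_def by (simp add: sum_subtractf[symmetric] diff_divide_distrib algebra_simps)
      obtain j where j: "j \<in> {1..k}" "c j \<noteq> 0"
      proof (rule ccontr)
        assume "\<not> thesis"
        with that have z: "\<forall>j\<in>{1..k}. c j = 0" by blast
        have "(\<Sum>j\<le>k. c j * lam j) = (\<Sum>j\<le>k. c j * lam 0)"
        proof (intro sum.cong refl)
          fix j assume "j \<in> {..k}"
          then show "c j * lam j = c j * lam 0" using z by (cases "j = 0") auto
        qed
        also have "\<dots> = 1" using c_sum lam0 by (simp add: sum_distrib_right[symmetric])
        finally show False using c1 by simp
      qed
      have pos2: "(\<Sum>j\<le>k. (c j)^2 * (lam j - 1) / pr j) > 0"
      proof (rule sum_pos2[of _ j])
        show "j \<in> {..k}" using j by simp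
        have "lam j > 1" using lam_mono[of 0 j] j lam0 by simp
        then show "0 < (c j)^2 * (lam j - 1) / pr j" using j pk[of j] by simp
        fix i assume "i \<in> {..k}"
        then have "pr i > 0" "lam i \<ge> 1" using pk lam_ge by auto
        then show "0 \<le> (c i)^2 * (lam i - 1) / pr i" by simp
      qed simp
      show ?thesis using id1 nn1 id2 pos2 by linarith
    qed
    define Kc where "Kc = 2 * \<kappa> * (Sl - 1)"
    define a where "a = Kc / \<kappa>^2"
    have Kpos: "Kc > 0" using S1 kpos by (simp add: Kc_def)
    have apos: "a > 0" using Kpos kpos by (simp add: a_def)
    have ga: "2 / \<kappa> * (Sl - 1) / real B = a / real B" for B
      using kpos by (cases "B = 0") (simp_all add: a_def Kc_def power2_eq_square field_simps)
    obtain C1 where C1: "C1 > 0" "eventually (\<lambda>x. norm (D x - \<kappa>^2 * x^2) \<le> C1 * norm (x^3)) (at_right 0)"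
      using P1 by (elim landau_o.bigE) blast
    obtain C2 where C2: "C2 > 0" "eventually (\<lambda>x. norm (A x - 2 * \<kappa> * (Sl - 1) * x) \<le> C2 * norm (x^2)) (at_right 0)"
      using P3 by (elim landau_o.bigE) blast
    have "eventually (\<lambda>x. norm (D x - \<kappa>^2 * x^2) \<le> C1 * norm (x^3) \<and> norm (A x - 2 * \<kappa> * (Sl - 1) * x) \<le> C2 * norm (x^2)) (at_right 0)"
      using C1(2) C2(2) by (rule eventually_conj)
    then obtain \<delta> where \<delta>: "\<delta> > 0" and bnd: "\<And>x. 0 < x \<Longrightarrow> x < \<delta> \<Longrightarrow>
        norm (D x - \<kappa>^2 * x^2) \<le> C1 * norm (x^3) \<and> norm (A x - 2 * \<kappa> * (Sl - 1) * x) \<le> C2 * norm (x^2)"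
      unfolding eventually_at_right_field by auto
    have Dup: "D x \<le> \<kappa>^2 * x^2 + C1 * x^3" and Dlo: "D x \<ge> \<kappa>^2 * x^2 - C1 * x^3"
      and Alo: "A x \<ge> Kc * x - C2 * x^2" and Aup: "A x \<le> Kc * x + C2 * x^2"
      if "0 < x" "x < \<delta>" for x
    proof -
      from bnd[OF that] have "\<bar>D x - \<kappa>^2 * x^2\<bar> \<le> C1 * x^3" "\<bar>A x - Kc * x\<bar> \<le> C2 * x^2"
        using that by (auto simp: Kc_def abs_mult)
      then show "D x \<le> \<kappa>^2 * x^2 + C1 * x^3" "D x \<ge> \<kappa>^2 * x^2 - C1 * x^3"
        "A x \<ge> Kc * x - C2 * x^2" "A x \<le> Kc * x + C2 * x^2" by linarith+
    qed
    have Delta: "delta_mse k c lam pr mu x (real B) = D x - A x / real B" if "B > 0" for x and B :: nat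
      using P4 that by (simp add: D_def A_def)
    show "e \<sim>[at_top] (\<lambda>B. 2 / \<kappa> * (Sl - 1) / real B)"
      unfolding ga
    proof (rule asymp_equivI')
      show "((\<lambda>B. e B / (a / real B)) \<longlongrightarrow> 1) at_top"
      proof (rule tendstoI)
        fix r :: real assume r: "r > 0"
        define \<eta> where "\<eta> = min (r/2) (1/2)"
        have \<eta>: "0 < \<eta>" "\<eta> < 1" "\<eta> < r" using r by (auto simp: \<eta>_def)
        define X where "X = (4 * C1 * a^2 + 2 * C2 * a) / (\<eta> * Kc)"
        obtain N :: nat where N: "max X (2 * a / \<delta>) < real N" using reals_Archimedean2 by blast
        have "\<forall>\<^sub>F B in at_top. B \<ge> Suc N \<and> lower_boundary (\<lambda>\<epsilon>. delta_mse k c lam pr mu \<epsilon> (real B)) (e B)"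
          using eventually_ge_at_top evb by (rule eventually_conj)
        then show "\<forall>\<^sub>F B in at_top. dist (e B / (a / real B)) 1 < r"
        proof eventually_elim
          case (elim B)
          have B0: "real B > 0" and BN: "real B > real N" using elim by auto
          have BX: "(4 * C1 * a^2 + 2 * C2 * a) / real B < \<eta> * Kc"
          proof -
            have "X < real B" using N BN by linarith
            then have "4 * C1 * a^2 + 2 * C2 * a < \<eta> * Kc * real B"
              using \<eta> Kpos by (simp add: X_def pos_divide_less_eq mult.commute)
            then show ?thesis using B0 by (simp add: pos_divide_less_eq mult.commute)
          qed
          have Bd: "2 * a / real B < \<delta>"
          proof -
            have "2 * a / \<delta> < real B" using N BN by linarith
            then have "2 * a < real B * \<delta>" using \<delta> by (simp add: pos_divide_less_eq)
            then show ?thesis using B0 by (simp add: pos_divide_less_eq mult.commute)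
          qed
          have lb: "0 < e B" "D (e B) - A (e B) / real B = 0"
            "\<And>x. x \<in> {0<..<e B} \<Longrightarrow> D x - A x / real B < 0"
            using elim B0 Delta[of B] unfolding lower_boundary_def by auto
          have two: "(1 + \<eta>) * a / real B \<le> 2 * a / real B"
            using \<eta> apos B0 by (intro divide_right_mono mult_right_mono) auto
          have one: "(1 - \<eta>) * a / real B \<le> 2 * a / real B"
            using \<eta> apos B0 by (intro divide_right_mono mult_right_mono) auto
          have L: "(1 - \<eta>) * a / real B \<le> e B"
          proof (rule ccontr)
            assume "\<not> ?thesis"
            then have x1: "e B \<le> (1 - \<eta>) * a / real B" by simp
            have "e B < \<delta>" using x1 one Bd by linarith
            have "D (e B) - A (e B) / real B < 0"
              by (rule lower_ineq[OF kpos Kpos a_def B0 \<eta>(1,2) lb(1) x1 less_imp_le[OF C1(1)] less_imp_le[OF C2(1)]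
                    Dup[OF lb(1) \<open>e B < \<delta>\<close>] Alo[OF lb(1) \<open>e B < \<delta>\<close>] BX])
            then show False using lb(2) by simp
          qed
          have U: "e B \<le> (1 + \<eta>) * a / real B"
          proof (rule ccontr)
            assume "\<not> ?thesis"
            then have y1: "(1 + \<eta>) * a / real B < e B" by simp
            define y where "y = (1 + \<eta>) * a / real B"
            have y0: "y > 0" using \<eta> apos B0 by (simp add: y_def)
            have yd: "y < \<delta>" using two Bd by (simp add: y_def)
            have "D y - A y / real B > 0"
              by (rule upper_ineq[OF kpos Kpos a_def B0 \<eta>(1,2) y_def less_imp_le[OF C1(1)] less_imp_le[OF C2(1)]
                    Dlo[OF y0 yd] Aup[OF y0 yd] BX])
            moreover have "D y - A y / real B < 0" using lb(3)[of y] y0 y1 by (simp add: y_def)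
            ultimately show False by simp
          qed
          have q: "e B / (a / real B) = e B * real B / a" using B0 apos by simp
          have "(1 - \<eta>) \<le> e B * real B / a"
            using L B0 apos by (simp add: field_simps)
          moreover have "e B * real B / a \<le> 1 + \<eta>"
            using U B0 apos by (simp add: field_simps)
          ultimately show ?case unfolding q dist_real_def using \<eta> by linarith
        qed
      qed
    qed
  qed
  show ?thesis
    using P1 P2 P3 P4 P5 unfolding D_def A_def Sl_def \<kappa>_def by simp
qed


end
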